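(* For a group $G$ the following are equivalent: (1) $G$ is non-abelian; (2) there exist pairwise disjoint subsets $E_1,E_2,E_3,E_4,E_5$ of $G$ and elements $g_1,g_2\in G$ such that $g_1E_1=E_2=g_2^{-1}E_4$ and $E_3=g_1^{-1}E_5=g_2E_1$.
   Context: Here $gE=\{gx:x\in E\}$ denotes left translation in $G$. *)

theory Defs
  imports "HOL-Algebra.Coset"
begin

end

theory Submission
  imports Defs
begin

theorem mainTheorem11:
  fixes G (structure)
  assumes "group G"
  shows "\<not> comm_group G \<longleftrightarrow>
    (\<exists>E1 E2 E3 E4 E5 g1 g2.
       E1 \<subseteq> carrier G \<and> E2 \<subseteq> carrier G \<and> E3 \<subseteq> carrier G \<and>
       E4 \<subseteq> carrier G \<and> E5 \<subseteq> carrier G \<and>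
       E1 \<noteq> {} \<and> E2 \<noteq> {} \<and> E3 \<noteq> {} \<and> E4 \<noteq> {} \<and> E5 \<noteq> {} \<and>
       disjnt E1 E2 \<and> disjnt E1 E3 \<and> disjnt E1 E4 \<and> disjnt E1 E5 \<and>
       disjnt E2 E3 \<and> disjnt E2 E4 \<and> disjnt E2 E5 \<and>
       disjnt E3 E4 \<and> disjnt E3 E5 \<and> disjnt E4 E5 \<and>
       g1 \<in> carrier G \<and> g2 \<in> carrier G \<and>
       g1 <# E1 = E2 \<and> E2 = (inv g2) <# E4 \<and>
       E3 = (inv g1) <# E5 \<and> (inv g1) <# E5 = g2 <# E1)"
proof
  interpret group G by fact
  assume nc: "\<not> comm_group G"
  obtain a b where ab: "a \<in> carrier G" "b \<in> carrier G" "a \<otimes> b \<noteq> b \<otimes> a"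
    using nc group_comm_groupI by blast
  have a1: "a \<noteq> \<one>" using ab by auto
  have b1: "b \<noteq> \<one>" using ab by auto
  have abne: "a \<noteq> b" using ab by auto
  have ab1: "a \<otimes> b \<noteq> \<one>"
  proof
    assume h: "a \<otimes> b = \<one>"
    then have "b = inv a" using ab by (metis inv_equality l_inv r_inv inv_closed m_assoc r_one l_one)
    then show False using ab by simp
  qed
  have ba1: "b \<otimes> a \<noteq> \<one>"
  proof
    assume h: "b \<otimes> a = \<one>"
    then have "b = inv a" using ab by (simp add: inv_equality)
    then show False using ab by simp
  qed
  have s: "\<And>x y. x \<in> carrier G \<Longrightarrow> x <# {y} = {x \<otimes> y}" by (simp add: l_coset_def)
  show "\<exists>E1 E2 E3 E4 E5 g1 g2.
       E1 \<subseteq> carrier G \<and> E2 \<subseteq> carrier G \<and> E3 \<subseteq> carrier G \<and>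
       E4 \<subseteq> carrier G \<and> E5 \<subseteq> carrier G \<and>
       E1 \<noteq> {} \<and> E2 \<noteq> {} \<and> E3 \<noteq> {} \<and> E4 \<noteq> {} \<and> E5 \<noteq> {} \<and>
       disjnt E1 E2 \<and> disjnt E1 E3 \<and> disjnt E1 E4 \<and> disjnt E1 E5 \<and>
       disjnt E2 E3 \<and> disjnt E2 E4 \<and> disjnt E2 E5 \<and>
       disjnt E3 E4 \<and> disjnt E3 E5 \<and> disjnt E4 E5 \<and>
       g1 \<in> carrier G \<and> g2 \<in> carrier G \<and>
       g1 <# E1 = E2 \<and> E2 = (inv g2) <# E4 \<and>
       E3 = (inv g1) <# E5 \<and> (inv g1) <# E5 = g2 <# E1"
  proof (intro exI conjI)
    show "a <# {\<one>} = {a}" using ab by (simp add: s)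
    show "{a} = inv b <# {b \<otimes> a}" using ab by (simp add: s m_assoc[symmetric])
    show "{b} = inv a <# {a \<otimes> b}" using ab by (simp add: s m_assoc[symmetric])
    show "inv a <# {a \<otimes> b} = b <# {\<one>}" using ab by (simp add: s m_assoc[symmetric])
  qed (use ab a1 b1 abne ab1 ba1 in \<open>auto simp: disjnt_def\<close>)
next
  interpret group G by fact
  assume "\<exists>E1 E2 E3 E4 E5 g1 g2.
       E1 \<subseteq> carrier G \<and> E2 \<subseteq> carrier G \<and> E3 \<subseteq> carrier G \<and>
       E4 \<subseteq> carrier G \<and> E5 \<subseteq> carrier G \<and>
       E1 \<noteq> {} \<and> E2 \<noteq> {} \<and> E3 \<noteq> {} \<and> E4 \<noteq> {} \<and> E5 \<noteq> {} \<and>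
       disjnt E1 E2 \<and> disjnt E1 E3 \<and> disjnt E1 E4 \<and> disjnt E1 E5 \<and>
       disjnt E2 E3 \<and> disjnt E2 E4 \<and> disjnt E2 E5 \<and>
       disjnt E3 E4 \<and> disjnt E3 E5 \<and> disjnt E4 E5 \<and>
       g1 \<in> carrier G \<and> g2 \<in> carrier G \<and>
       g1 <# E1 = E2 \<and> E2 = (inv g2) <# E4 \<and>
       E3 = (inv g1) <# E5 \<and> (inv g1) <# E5 = g2 <# E1"
  then obtain E1 E2 E3 E4 E5 g1 g2 where H:
       "E1 \<subseteq> carrier G" "E2 \<subseteq> carrier G" "E3 \<subseteq> carrier G"
       "E4 \<subseteq> carrier G" "E5 \<subseteq> carrier G" "E4 \<noteq> {}" "disjnt E4 E5"
       "g1 \<in> carrier G" "g2 \<in> carrier G"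
       "g1 <# E1 = E2" "E2 = (inv g2) <# E4"
       "E3 = (inv g1) <# E5" "(inv g1) <# E5 = g2 <# E1" by blast
  show "\<not> comm_group G"
  proof
    assume c: "comm_group G"
    have "g2 <# E2 = g2 <# (inv g2 <# E4)" using H(11) by simp
    also have "\<dots> = E4" using H(4,9) by (simp add: lcos_m_assoc lcos_mult_one)
    finally have e4: "E4 = g2 <# E2" by simp
    have "g1 <# E3 = g1 <# (inv g1 <# E5)" using H(12) by simp
    also have "\<dots> = E5" using H(5,8) by (simp add: lcos_m_assoc lcos_mult_one)
    finally have e5: "E5 = g1 <# E3" by simp
    have "E4 = (g2 \<otimes> g1) <# E1" using e4 H(1,8,9,10) lcos_m_assoc by metis
    moreover have "E3 = g2 <# E1" using H by simp
    then have "E5 = (g1 \<otimes> g2) <# E1" using e5 H(1,8,9) lcos_m_assoc by metis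
    moreover have "g2 \<otimes> g1 = g1 \<otimes> g2" using c H by (simp add: comm_monoid.m_comm comm_group.axioms(1))
    ultimately have "E4 = E5" by simp
    then show False using H by (auto simp: disjnt_def)
  qed
qed

end
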